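(* Let Assumptions 1 (with $\delta\in(0,1]$) and 2 hold. For $A\ge1$ define $\alpha=2L\{1-\Phi(A\sqrt{2\log L})\}+2A_0(1+A\sqrt{2\log L})^{1+\delta}/(L^{A^2-1}d_{n,\delta}^{2+\delta})$, set $r=A\sqrt{2\log(L)/n}$, and assume $L\le\exp(d_{n,\delta}^2/(2A^2))$. Let $\widehat\beta$ be any solution of $$\min\Big\{|{\bf D_X}^{-1}\beta|_1:\ \beta\in\mathbb R^K,\ \Big|\frac1n{\bf D_Z}{\bf Z}^T({\bf Y}-{\bf X}\beta)\Big|_\infty\le\sigma_*r\Big\},$$ where $\sigma_*$ is the constant of Assumption 2. Then with probability at least $1-\alpha-\gamma_1$, $$\big|{\bf D_X}^{-1}(\widehat\beta-\beta^* )\big|_p\le\frac{2\sigma_*r}{\kappa_{p,J(\beta^* )}}\quad\forall p\in[1,\infty],\qquad |\widehat\beta_k-\beta^*_k|\le\frac{2\sigma_*r}{x_{k*}\kappa^*_{k,J(\beta^* )}}\quad\forall k=1,\dots,K,$$ where the sensitivities are those defined with the cone $C_J$ taken with $c=0$, i.e. $C_J=\{\Delta:|\Delta_{J^c}|_1\le|\Delta_J|_1\}$.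
   Context: Setting: integers $n,K,L$ with $L\ge K$, $k_{\rm end}\in\{0,\dots,K\}$; observations $(y_i,x_i,z_i)$, $i=1,\dots,n$, with $y_i=x_i^T\beta^*+u_i$, $x_i\in\mathbb R^K$, $z_i\in\mathbb R^L$, the $(y_i,x_i,z_i,u_i)$ mutually independent; the exogenous regressors are their own instruments: $z_{li}=x_{(k_{\rm end}+l)i}$ for $l\le K-k_{\rm end}$. ${\bf Y},{\bf X},{\bf Z}$ data matrices; $x_{k*}=\max_i|x_{ki}|$, $z_{l*}=\max_i|z_{li}|$ (positive); ${\bf D_X}={\rm diag}(x_{k*}^{-1})$, ${\bf D_Z}={\rm diag}(z_{l*}^{-1})$; $\Psi_n=\frac1n{\bf D_Z}{\bf Z}^T{\bf X}{\bf D_X}$; $\mathbb E_n[U^2]=\frac1n\sum u_i^2$. $J(\beta)$ support; $\Delta_J$ zeroes coordinates outside $J$. Sensitivities: $\kappa_{p,J}=\inf\{|\Psi_n\Delta|_\infty:\Delta\in C_J,|\Delta|_p=1\}$, $\kappa^*_{k,J}=\inf\{|\Psi_n\Delta|_\infty:\Delta\in C_J,\Delta_k=1\}$. Assumption 1: for all $i,l$, $\mathbb E|z_{li}u_i|^{2+\delta}<\infty$, $\mathbb E[z_{li}u_i]=0$, $z_{li}u_i$ not a.s. zero; $d_{n,\delta}=\min_l\sqrt{\sum_i\mathbb E z_{li}^2u_i^2}/(\sum_i\mathbb E|z_{li}u_i|^{2+\delta})^{1/(2+\delta)}$. Assumption 2: there are $\sigma_*>0$, $\gamma_1\in(0,1)$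 with $\mathbb P(\mathbb E_n[U^2]\le\sigma_*^2)\ge1-\gamma_1$. $\Phi$ is the standard normal cdf and $A_0$ the absolute constant of the Jing–Shao–Wang self-normalized moderate deviation bound: for independent mean-zero $X_i$ with $0<\mathbb E|X_i|^{2+\delta}<\infty$, $|\mathbb P(S_n/V_n\ge x)-(1-\Phi(x))|\le A_0(1+x)^{1+\delta}e^{-x^2/2}/d^{2+\delta}$ for $0\le x\le d$, with $S_n=\sum X_i$, $V_n^2=\sum X_i^2$, $d=(\sum\mathbb EX_i^2)^{1/2}/(\sum\mathbb E|X_i|^{2+\delta})^{1/(2+\delta)}$. *)

theory Defs
  imports "HOL-Probability.Probability"
begin

definition Phi :: "real \<Rightarrow> real" where
  "Phi x = measure (density lborel std_normal_density) {..x}"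

definition lpnorm :: "ereal \<Rightarrow> nat set \<Rightarrow> (nat \<Rightarrow> real) \<Rightarrow> real" where
  "lpnorm p I v = (if p = \<infinity> then Max (insert 0 ((\<lambda>i. \<bar>v i\<bar>) ` I))
     else (\<Sum>i\<in>I. \<bar>v i\<bar> powr real_of_ereal p) powr (1 / real_of_ereal p))"

text \<open>max_{i=1..n} |f i|  (used for x_{k*}, z_{l*}).\<close>
definition maxabs :: "nat \<Rightarrow> (nat \<Rightarrow> real) \<Rightarrow> real" where
  "maxabs n f = Max ((\<lambda>i. \<bar>f i\<bar>) ` {1..n})"

text \<open>Psi_n = (1/n) D_Z Z^T X D_X, entry (l,k); X k i = x_{ki}, Z l i = z_{li}.\<close>
definition Psi :: "nat \<Rightarrow> (nat \<Rightarrow> nat \<Rightarrow> real) \<Rightarrow> (nat \<Rightarrow> nat \<Rightarrow> real) \<Rightarrow> nat \<Rightarrow> nat \<Rightarrow> real" where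
  "Psi n X Z l k = (1 / real n) * (\<Sum>i=1..n. Z l i * X k i) / (maxabs n (Z l) * maxabs n (X k))"

definition supp :: "nat \<Rightarrow> (nat \<Rightarrow> real) \<Rightarrow> nat set" where
  "supp K b = {k \<in> {1..K}. b k \<noteq> 0}"

definition cone0 :: "nat \<Rightarrow> nat set \<Rightarrow> (nat \<Rightarrow> real) \<Rightarrow> bool" where
  "cone0 K J D \<longleftrightarrow> (\<Sum>k\<in>{1..K} - J. \<bar>D k\<bar>) \<le> (\<Sum>k\<in>J. \<bar>D k\<bar>)"

text \<open>Vectors of R^K (coordinates outside 1..K are zero).\<close>
definition vecK :: "nat \<Rightarrow> (nat \<Rightarrow> real) \<Rightarrow> bool" where
  "vecK K D \<longleftrightarrow> (\<forall>k. k \<notin> {1..K} \<longrightarrow> D k = 0)"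

definition PsiD :: "nat \<Rightarrow> nat \<Rightarrow> nat \<Rightarrow> (nat \<Rightarrow> nat \<Rightarrow> real) \<Rightarrow> (nat \<Rightarrow> nat \<Rightarrow> real) \<Rightarrow> (nat \<Rightarrow> real) \<Rightarrow> real" where
  "PsiD n K L X Z D = lpnorm \<infinity> {1..L} (\<lambda>l. \<Sum>k=1..K. Psi n X Z l k * D k)"

text \<open>Sensitivities (extended-real valued: inf of the empty set is +infinity).\<close>
definition kappa :: "nat \<Rightarrow> nat \<Rightarrow> nat \<Rightarrow> (nat \<Rightarrow> nat \<Rightarrow> real) \<Rightarrow> (nat \<Rightarrow> nat \<Rightarrow> real) \<Rightarrow> ereal \<Rightarrow> nat set \<Rightarrow> ereal" where
  "kappa n K L X Z p J = Inf {ereal (PsiD n K L X Z D) | D. vecK K D \<and> cone0 K J D \<and> lpnorm p {1..K} D = 1}"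

definition kappa_star :: "nat \<Rightarrow> nat \<Rightarrow> nat \<Rightarrow> (nat \<Rightarrow> nat \<Rightarrow> real) \<Rightarrow> (nat \<Rightarrow> nat \<Rightarrow> real) \<Rightarrow> nat \<Rightarrow> nat set \<Rightarrow> ereal" where
  "kappa_star n K L X Z k0 J = Inf {ereal (PsiD n K L X Z D) | D. vecK K D \<and> cone0 K J D \<and> D k0 = 1}"

definition feasible :: "nat \<Rightarrow> nat \<Rightarrow> nat \<Rightarrow> (nat \<Rightarrow> real) \<Rightarrow> (nat \<Rightarrow> nat \<Rightarrow> real) \<Rightarrow> (nat \<Rightarrow> nat \<Rightarrow> real) \<Rightarrow> real \<Rightarrow> (nat \<Rightarrow> real) \<Rightarrow> bool" where
  "feasible n K L Y X Z t b \<longleftrightarrow>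
     lpnorm \<infinity> {1..L} (\<lambda>l. (1 / real n) * (\<Sum>i=1..n. Z l i * (Y i - (\<Sum>k=1..K. X k i * b k))) / maxabs n (Z l)) \<le> t"

definition objective :: "nat \<Rightarrow> nat \<Rightarrow> (nat \<Rightarrow> nat \<Rightarrow> real) \<Rightarrow> (nat \<Rightarrow> real) \<Rightarrow> real" where
  "objective n K X b = (\<Sum>k=1..K. maxabs n (X k) * \<bar>b k\<bar>)"

definition is_solution :: "nat \<Rightarrow> nat \<Rightarrow> nat \<Rightarrow> (nat \<Rightarrow> real) \<Rightarrow> (nat \<Rightarrow> nat \<Rightarrow> real) \<Rightarrow> (nat \<Rightarrow> nat \<Rightarrow> real) \<Rightarrow> real \<Rightarrow> (nat \<Rightarrow> real) \<Rightarrow> bool" where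
  "is_solution n K L Y X Z t b \<longleftrightarrow> feasible n K L Y X Z t b \<and>
     (\<forall>b'. feasible n K L Y X Z t b' \<longrightarrow> objective n K X b \<le> objective n K X b')"

definition dnd :: "'a measure \<Rightarrow> nat \<Rightarrow> nat \<Rightarrow> (nat \<Rightarrow> nat \<Rightarrow> 'a \<Rightarrow> real) \<Rightarrow> (nat \<Rightarrow> 'a \<Rightarrow> real) \<Rightarrow> real \<Rightarrow> real" where
  "dnd M n L z u \<delta> = Min ((\<lambda>l. sqrt (\<Sum>i=1..n. integral\<^sup>L M (\<lambda>\<omega>. (z l i \<omega>)\<^sup>2 * (u i \<omega>)\<^sup>2))
        / (\<Sum>i=1..n. integral\<^sup>L M (\<lambda>\<omega>. \<bar>z l i \<omega> * u i \<omega>\<bar> powr (2 + \<delta>))) powr (1 / (2 + \<delta>))) ` {1..L})"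

text \<open>Observation i as a random element (y_i, x_i, z_i, u_i).\<close>
definition obs_space :: "nat \<Rightarrow> nat \<Rightarrow> (real \<times> (nat \<Rightarrow> real) \<times> (nat \<Rightarrow> real) \<times> real) measure" where
  "obs_space K L = borel \<Otimes>\<^sub>M (Pi\<^sub>M {1..K} (\<lambda>_. borel) \<Otimes>\<^sub>M (Pi\<^sub>M {1..L} (\<lambda>_. borel) \<Otimes>\<^sub>M borel))"

definition obs :: "nat \<Rightarrow> nat \<Rightarrow> (nat \<Rightarrow> 'a \<Rightarrow> real) \<Rightarrow> (nat \<Rightarrow> nat \<Rightarrow> 'a \<Rightarrow> real) \<Rightarrow> (nat \<Rightarrow> nat \<Rightarrow> 'a \<Rightarrow> real) \<Rightarrow> (nat \<Rightarrow> 'a \<Rightarrow> real) \<Rightarrow> nat \<Rightarrow> 'a \<Rightarrow> real \<times> (nat \<Rightarrow> real) \<times> (nat \<Rightarrow> real) \<times> real" where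
  "obs K L y x z u i \<omega> = (y i \<omega>, (\<lambda>k\<in>{1..K}. x k i \<omega>), (\<lambda>l\<in>{1..L}. z l i \<omega>), u i \<omega>)"

text \<open>A0 is a constant for which the Jing-Shao-Wang self-normalized moderate deviation
  bound holds (for the given delta), for every probability space (on the type 'a), every m >= 1
  and every independent family of mean-zero variables with 0 < E|X_i|^(2+delta) < infinity.\<close>
definition jsw_constant :: "'a itself \<Rightarrow> real \<Rightarrow> real \<Rightarrow> bool" where
  "jsw_constant (_ :: 'a itself) A0 \<delta> \<longleftrightarrow>
    (\<forall>(N :: 'a measure) (m :: nat) (X :: nat \<Rightarrow> 'a \<Rightarrow> real).
       prob_space N \<and> 1 \<le> m \<and> prob_space.indep_vars N (\<lambda>_. borel) X {1..m} \<and>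
       (\<forall>i\<in>{1..m}. integrable N (X i) \<and> integral\<^sup>L N (X i) = 0 \<and>
          integrable N (\<lambda>\<omega>. \<bar>X i \<omega>\<bar> powr (2 + \<delta>)) \<and>
          0 < integral\<^sup>L N (\<lambda>\<omega>. \<bar>X i \<omega>\<bar> powr (2 + \<delta>)))
       \<longrightarrow>
       (let d = sqrt (\<Sum>i=1..m. integral\<^sup>L N (\<lambda>\<omega>. (X i \<omega>)\<^sup>2))
                / (\<Sum>i=1..m. integral\<^sup>L N (\<lambda>\<omega>. \<bar>X i \<omega>\<bar> powr (2 + \<delta>))) powr (1 / (2 + \<delta>))
        in \<forall>t. 0 \<le> t \<and> t \<le> d \<longrightarrow>
             \<bar>measure N {\<omega> \<in> space N. (\<Sum>i=1..m. X i \<omega>) / sqrt (\<Sum>i=1..m. (X i \<omega>)\<^sup>2) \<ge> t}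
                - (1 - Phi t)\<bar>
             \<le> A0 * (1 + t) powr (1 + \<delta>) * exp (- t\<^sup>2 / 2) / d powr (2 + \<delta>)))"

end

theory Submission
  imports Defs
begin


lemma lpnorm_nonneg: "1 \<le> p \<Longrightarrow> finite I \<Longrightarrow> 0 \<le> lpnorm p I v"
  unfolding lpnorm_def by (auto intro: Max_ge)

lemma lpnorm_scale:
  assumes "finite I" "a \<noteq> 0" "1 \<le> p"
  shows "lpnorm p I (\<lambda>i. v i / a) = lpnorm p I v / \<bar>a\<bar>"
proof (cases "p = \<infinity>")
  case True
  have m: "mono (\<lambda>x::real. x / \<bar>a\<bar>)" using assms(2) by (auto simp: mono_def divide_right_mono)
  have "Max (insert 0 ((\<lambda>i. \<bar>v i / a\<bar>) ` I)) = Max ((\<lambda>x. x / \<bar>a\<bar>) ` insert 0 ((\<lambda>i. \<bar>v i\<bar>) ` I))"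
    by (simp add: image_image abs_divide)
  also have "\<dots> = Max (insert 0 ((\<lambda>i. \<bar>v i\<bar>) ` I)) / \<bar>a\<bar>"
    using mono_Max_commute[OF m, of "insert 0 ((\<lambda>i. \<bar>v i\<bar>) ` I)"] assms(1) by simp
  finally show ?thesis using True unfolding lpnorm_def by simp
next
  case False
  define q where "q = real_of_ereal p"
  have q: "1 \<le> q" using assms(3) False unfolding q_def
    by (cases p) auto
  have "(\<Sum>i\<in>I. \<bar>v i / a\<bar> powr q) = (\<Sum>i\<in>I. \<bar>v i\<bar> powr q) / \<bar>a\<bar> powr q"
    by (simp add: abs_divide powr_divide sum_divide_distrib)
  hence "(\<Sum>i\<in>I. \<bar>v i / a\<bar> powr q) powr (1/q) = (\<Sum>i\<in>I. \<bar>v i\<bar> powr q) powr (1/q) / (\<bar>a\<bar> powr q) powr (1/q)"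
    by (simp add: powr_divide sum_nonneg)
  also have "(\<bar>a\<bar> powr q) powr (1/q) = \<bar>a\<bar>" using q assms(2) by (simp add: powr_powr)
  finally show ?thesis using False unfolding lpnorm_def q_def by simp
qed

lemma ereal_bound:
  fixes \<kappa> :: ereal
  assumes "0 \<le> s" "0 < c" "0 \<le> \<kappa>" "0 < s \<Longrightarrow> \<kappa> \<le> ereal (c / s)"
  shows "ereal s \<le> ereal c / \<kappa>"
proof (cases \<kappa>)
  case (real r)
  show ?thesis
  proof (cases "r = 0")
    case True thus ?thesis using real assms by simp
  next
    case False
    hence r: "r > 0" using real assms by simp
    have "s \<le> c / r"
    proof (cases "s = 0")
      case True thus ?thesis using r assms by simp
    next
      case False
      hence "r \<le> c / s" using assms real by simp
      thus ?thesis using False assms r by (simp add: field_simps)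
    qed
    thus ?thesis using real r by simp
  qed
next
  case PInf
  hence "s = 0" using assms by (cases "s = 0") auto
  thus ?thesis using PInf by simp
next
  case MInf thus ?thesis using assms by simp
qed


lemma lpnorm_inf_le:
  assumes "finite I" "lpnorm \<infinity> I f \<le> t" "l \<in> I"
  shows "\<bar>f l\<bar> \<le> t"
proof -
  have "\<bar>f l\<bar> \<le> Max (insert 0 ((\<lambda>i. \<bar>f i\<bar>) ` I))" using assms(1,3) by (intro Max_ge) auto
  thus ?thesis using assms(2) unfolding lpnorm_def by simp
qed

lemma lpnorm_inf_leI:
  assumes "finite I" "\<And>l. l \<in> I \<Longrightarrow> \<bar>f l\<bar> \<le> t" "0 \<le> t"
  shows "lpnorm \<infinity> I f \<le> t"
  using assms unfolding lpnorm_def by (auto simp: Max_le_iff)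


lemma lpnorm_cong:
  assumes "\<And>i. i \<in> I \<Longrightarrow> v i = w i"
  shows "lpnorm p I v = lpnorm p I w"
proof -
  have "(\<lambda>i. \<bar>v i\<bar>) ` I = (\<lambda>i. \<bar>w i\<bar>) ` I" using assms by auto
  moreover have "(\<Sum>i\<in>I. \<bar>v i\<bar> powr real_of_ereal p) = (\<Sum>i\<in>I. \<bar>w i\<bar> powr real_of_ereal p)"
    using assms by (intro sum.cong) auto
  ultimately show ?thesis unfolding lpnorm_def by simp
qed




lemma det:
  fixes X Z :: "nat \<Rightarrow> nat \<Rightarrow> real" and Y \<beta>s \<beta>h :: "nat \<Rightarrow> real"
  assumes xpos: "\<forall>k\<in>{1..K}. 0 < maxabs n (X k)"
    and zpos: "\<forall>l\<in>{1..L}. 0 < maxabs n (Z l)"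
    and fs: "feasible n K L Y X Z t \<beta>s"
    and sol: "is_solution n K L Y X Z t \<beta>h"
    and t: "0 < t"
  shows "(\<forall>p::ereal. 1 \<le> p \<longrightarrow>
           ereal (lpnorm p {1..K} (\<lambda>k. maxabs n (X k) * (\<beta>h k - \<beta>s k)))
             \<le> ereal (2 * t) / kappa n K L X Z p (supp K \<beta>s)) \<and>
        (\<forall>k\<in>{1..K}.
           ereal \<bar>\<beta>h k - \<beta>s k\<bar>
             \<le> ereal (2 * t) / (ereal (maxabs n (X k)) * kappa_star n K L X Z k (supp K \<beta>s)))"
proof -
  define J where "J = supp K \<beta>s"
  have J: "J \<subseteq> {1..K}" unfolding J_def supp_def by auto
  define D where "D k = (if k \<in> {1..K} then maxabs n (X k) * (\<beta>h k - \<beta>s k) else 0)" for k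
  define g where "g b l = (1 / real n) * (\<Sum>i=1..n. Z l i * (Y i - (\<Sum>k=1..K. X k i * b k))) / maxabs n (Z l)" for b l
  have fh: "feasible n K L Y X Z t \<beta>h" using sol unfolding is_solution_def by auto
  have gs: "\<bar>g \<beta>s l\<bar> \<le> t" if "l \<in> {1..L}" for l
    using lpnorm_inf_le[OF _ fs[unfolded feasible_def] that] unfolding g_def by simp
  have gh: "\<bar>g \<beta>h l\<bar> \<le> t" if "l \<in> {1..L}" for l
    using lpnorm_inf_le[OF _ fh[unfolded feasible_def] that] unfolding g_def by simp
  have lin: "(\<Sum>k=1..K. Psi n X Z l k * D k) = g \<beta>s l - g \<beta>h l" if "l \<in> {1..L}" for l
  proof -
    have "(\<Sum>k=1..K. Psi n X Z l k * D k) =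
        (\<Sum>k=1..K. (1 / real n) * (\<Sum>i=1..n. Z l i * X k i * (\<beta>h k - \<beta>s k)) / maxabs n (Z l))"
    proof (rule sum.cong[OF refl])
      fix k assume k: "k \<in> {1..K}"
      have a: "maxabs n (X k) \<noteq> 0" using bspec[OF xpos k] by simp
      have e: "(\<Sum>i=1..n. Z l i * X k i * (\<beta>h k - \<beta>s k)) = (\<Sum>i=1..n. Z l i * X k i) * (\<beta>h k - \<beta>s k)"
        by (simp add: sum_distrib_right)
      show "Psi n X Z l k * D k = (1 / real n) * (\<Sum>i=1..n. Z l i * X k i * (\<beta>h k - \<beta>s k)) / maxabs n (Z l)"
        unfolding e Psi_def D_def using k a by simp
    qed
    also have "\<dots> = (1 / real n) * (\<Sum>k=1..K. \<Sum>i=1..n. Z l i * X k i * (\<beta>h k - \<beta>s k)) / maxabs n (Z l)"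
      by (simp only: sum_distrib_left sum_divide_distrib)
    also have "(\<Sum>k=1..K. \<Sum>i=1..n. Z l i * X k i * (\<beta>h k - \<beta>s k)) =
       (\<Sum>i=1..n. Z l i * (Y i - (\<Sum>k=1..K. X k i * \<beta>s k))) - (\<Sum>i=1..n. Z l i * (Y i - (\<Sum>k=1..K. X k i * \<beta>h k)))"
    proof -
      have "(\<Sum>k=1..K. \<Sum>i=1..n. Z l i * X k i * (\<beta>h k - \<beta>s k)) = (\<Sum>i=1..n. \<Sum>k=1..K. Z l i * X k i * (\<beta>h k - \<beta>s k))"
        by (rule sum.swap)
      also have "\<dots> = (\<Sum>i=1..n. Z l i * (Y i - (\<Sum>k=1..K. X k i * \<beta>s k)) - Z l i * (Y i - (\<Sum>k=1..K. X k i * \<beta>h k)))"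
      proof (rule sum.cong[OF refl])
        fix i
        have "(\<Sum>k=1..K. Z l i * X k i * (\<beta>h k - \<beta>s k)) = Z l i * ((\<Sum>k=1..K. X k i * \<beta>h k) - (\<Sum>k=1..K. X k i * \<beta>s k))"
          by (simp add: sum_distrib_left sum_subtractf[symmetric] algebra_simps)
        thus "(\<Sum>k=1..K. Z l i * X k i * (\<beta>h k - \<beta>s k)) = Z l i * (Y i - (\<Sum>k=1..K. X k i * \<beta>s k)) - Z l i * (Y i - (\<Sum>k=1..K. X k i * \<beta>h k))"
          by (simp add: algebra_simps)
      qed
      also have "\<dots> = (\<Sum>i=1..n. Z l i * (Y i - (\<Sum>k=1..K. X k i * \<beta>s k))) - (\<Sum>i=1..n. Z l i * (Y i - (\<Sum>k=1..K. X k i * \<beta>h k)))"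
        by (rule sum_subtractf)
      finally show ?thesis .
    qed
    finally show ?thesis unfolding g_def by (simp add: diff_divide_distrib right_diff_distrib)
  qed
  have PD: "PsiD n K L X Z D \<le> 2 * t"
    unfolding PsiD_def
  proof (rule lpnorm_inf_leI)
    fix l assume l: "l \<in> {1..L}"
    show "\<bar>\<Sum>k = 1..K. Psi n X Z l k * D k\<bar> \<le> 2 * t"
      using lin[OF l] gs[OF l] gh[OF l] by simp
  qed (use t in auto)
  have vD: "vecK K D" unfolding vecK_def D_def by auto
  have obj: "objective n K X \<beta>h \<le> objective n K X \<beta>s" using sol fs unfolding is_solution_def by auto
  have cone: "cone0 K J D"
  proof -
    have s0: "\<beta>s k = 0" if "k \<in> {1..K} - J" for k using that unfolding J_def supp_def by auto
    have fin: "finite J" using J finite_subset by blast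
    have "objective n K X \<beta>h = (\<Sum>k\<in>J. maxabs n (X k) * \<bar>\<beta>h k\<bar>) + (\<Sum>k\<in>{1..K}-J. maxabs n (X k) * \<bar>\<beta>h k\<bar>)"
      unfolding objective_def using sum.subset_diff[OF J] by (simp add: add.commute)
    moreover have "objective n K X \<beta>s = (\<Sum>k\<in>J. maxabs n (X k) * \<bar>\<beta>s k\<bar>) + (\<Sum>k\<in>{1..K}-J. maxabs n (X k) * \<bar>\<beta>s k\<bar>)"
      unfolding objective_def using sum.subset_diff[OF J] by (simp add: add.commute)
    moreover have "(\<Sum>k\<in>{1..K}-J. maxabs n (X k) * \<bar>\<beta>s k\<bar>) = 0" using s0 by simp
    ultimately have A: "(\<Sum>k\<in>{1..K}-J. maxabs n (X k) * \<bar>\<beta>h k\<bar>) \<le> (\<Sum>k\<in>J. maxabs n (X k) * (\<bar>\<beta>s k\<bar> - \<bar>\<beta>h k\<bar>))"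
      using obj by (simp add: sum_subtractf right_diff_distrib)
    have B: "(\<Sum>k\<in>J. maxabs n (X k) * (\<bar>\<beta>s k\<bar> - \<bar>\<beta>h k\<bar>)) \<le> (\<Sum>k\<in>J. \<bar>D k\<bar>)"
    proof (rule sum_mono)
      fix k assume k: "k \<in> J"
      hence kk: "k \<in> {1..K}" using J by auto
      have "\<bar>\<beta>s k\<bar> - \<bar>\<beta>h k\<bar> \<le> \<bar>\<beta>h k - \<beta>s k\<bar>" by linarith
      hence "maxabs n (X k) * (\<bar>\<beta>s k\<bar> - \<bar>\<beta>h k\<bar>) \<le> maxabs n (X k) * \<bar>\<beta>h k - \<beta>s k\<bar>"
        using bspec[OF xpos kk] by (intro mult_left_mono) auto
      thus "maxabs n (X k) * (\<bar>\<beta>s k\<bar> - \<bar>\<beta>h k\<bar>) \<le> \<bar>D k\<bar>"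
        using kk bspec[OF xpos kk] unfolding D_def by (simp add: abs_mult)
    qed
    have C: "(\<Sum>k\<in>{1..K}-J. \<bar>D k\<bar>) = (\<Sum>k\<in>{1..K}-J. maxabs n (X k) * \<bar>\<beta>h k\<bar>)"
      proof (rule sum.cong[OF refl])
      fix k assume kk: "k \<in> {1..K} - J"
      hence k1: "k \<in> {1..K}" by auto
      show "\<bar>D k\<bar> = maxabs n (X k) * \<bar>\<beta>h k\<bar>" using s0[OF kk] bspec[OF xpos k1] k1 unfolding D_def by (simp add: abs_mult)
    qed
    show ?thesis unfolding cone0_def using A B C by linarith
  qed
  have scale: "vecK K (\<lambda>k. D k / a) \<and> cone0 K J (\<lambda>k. D k / a) \<and> PsiD n K L X Z (\<lambda>k. D k / a) = PsiD n K L X Z D / \<bar>a\<bar>"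
    if a: "a \<noteq> 0" for a
  proof (intro conjI)
    show "vecK K (\<lambda>k. D k / a)" using vD unfolding vecK_def by auto
    have "(\<Sum>k\<in>{1..K} - J. \<bar>D k / a\<bar>) = (\<Sum>k\<in>{1..K} - J. \<bar>D k\<bar>) / \<bar>a\<bar>"
      by (simp add: abs_divide sum_divide_distrib)
    moreover have "(\<Sum>k\<in>J. \<bar>D k / a\<bar>) = (\<Sum>k\<in>J. \<bar>D k\<bar>) / \<bar>a\<bar>"
      by (simp add: abs_divide sum_divide_distrib)
    ultimately show "cone0 K J (\<lambda>k. D k / a)" using cone a unfolding cone0_def
      by (simp add: divide_right_mono)
    have "(\<lambda>l. \<Sum>k = 1..K. Psi n X Z l k * (D k / a)) = (\<lambda>l. (\<Sum>k = 1..K. Psi n X Z l k * D k) / a)"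
      by (simp add: sum_divide_distrib)
    thus "PsiD n K L X Z (\<lambda>k. D k / a) = PsiD n K L X Z D / \<bar>a\<bar>"
      unfolding PsiD_def using lpnorm_scale[of "{1..L}" a "\<infinity>"] a by simp
  qed
  have PDnn: "0 \<le> PsiD n K L X Z D'" for D' unfolding PsiD_def by (rule lpnorm_nonneg) auto
  show ?thesis
  proof (intro conjI allI impI ballI)
    fix p :: ereal assume p: "1 \<le> p"
    have eqD: "lpnorm p {1..K} (\<lambda>k. maxabs n (X k) * (\<beta>h k - \<beta>s k)) = lpnorm p {1..K} D"
      by (rule lpnorm_cong) (simp add: D_def)
    have knn: "0 \<le> kappa n K L X Z p J" unfolding kappa_def
      by (rule Inf_greatest) (auto intro: PDnn)
    show "ereal (lpnorm p {1..K} (\<lambda>k. maxabs n (X k) * (\<beta>h k - \<beta>s k))) \<le> ereal (2 * t) / kappa n K L X Z p (supp K \<beta>s)"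
      unfolding eqD J_def[symmetric]
    proof (rule ereal_bound[OF lpnorm_nonneg[OF p] _ knn])
      assume s: "0 < lpnorm p {1..K} D"
      define s' where "s' = lpnorm p {1..K} D"
      have "s' \<noteq> 0" using s s'_def by simp
      from scale[OF this] have sc: "vecK K (\<lambda>k. D k / s')" "cone0 K J (\<lambda>k. D k / s')"
        "PsiD n K L X Z (\<lambda>k. D k / s') = PsiD n K L X Z D / s'" using s s'_def by auto
      have "lpnorm p {1..K} (\<lambda>k. D k / s') = 1"
        using lpnorm_scale[of "{1..K}" s' p D] s s'_def p by simp
      hence "kappa n K L X Z p J \<le> ereal (PsiD n K L X Z (\<lambda>k. D k / s'))"
        unfolding kappa_def using sc by (intro Inf_lower) blast
      also have "\<dots> \<le> ereal (2 * t / s')" using sc(3) PD s s'_def by (simp add: divide_right_mono)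
      finally show "kappa n K L X Z p J \<le> ereal (2 * t / lpnorm p {1..K} D)" using s'_def by simp
    qed (use t in auto)
  next
    fix k assume k: "k \<in> {1..K}"
    define a where "a = maxabs n (X k)"
    have a: "0 < a" using bspec[OF xpos k] a_def by auto
    have knn: "0 \<le> kappa_star n K L X Z k J" unfolding kappa_star_def
      by (rule Inf_greatest) (auto intro: PDnn)
    have "ereal \<bar>\<beta>h k - \<beta>s k\<bar> \<le> ereal (2 * t) / (ereal a * kappa_star n K L X Z k J)"
    proof (rule ereal_bound)
      show "0 \<le> ereal a * kappa_star n K L X Z k J" using a knn by simp
      assume s: "0 < \<bar>\<beta>h k - \<beta>s k\<bar>"
      have Dk: "D k = a * (\<beta>h k - \<beta>s k)" using k a_def D_def by simp
      hence Dk0: "D k \<noteq> 0" using s a by simp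
      from scale[OF this] have sc: "vecK K (\<lambda>j. D j / D k)" "cone0 K J (\<lambda>j. D j / D k)"
        "PsiD n K L X Z (\<lambda>j. D j / D k) = PsiD n K L X Z D / \<bar>D k\<bar>" by auto
      have "kappa_star n K L X Z k J \<le> ereal (PsiD n K L X Z (\<lambda>j. D j / D k))"
        unfolding kappa_star_def
        by (intro Inf_lower CollectI exI[where x="\<lambda>j. D j / D k"] conjI refl sc(1) sc(2)) (use Dk0 in simp)
      also have "\<dots> \<le> ereal (2 * t / \<bar>D k\<bar>)" using sc(3) PD Dk0 by (simp add: divide_right_mono)
      finally have "ereal a * kappa_star n K L X Z k J \<le> ereal a * ereal (2 * t / \<bar>D k\<bar>)"
        using a by (intro ereal_mult_left_mono) auto
      also have "\<dots> = ereal (2 * t / \<bar>\<beta>h k - \<beta>s k\<bar>)" using Dk a by (simp add: abs_mult)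
      finally show "ereal a * kappa_star n K L X Z k J \<le> ereal (2 * t / \<bar>\<beta>h k - \<beta>s k\<bar>)" .
    qed (use t in auto)
    thus "ereal \<bar>\<beta>h k - \<beta>s k\<bar> \<le> ereal (2 * t) / (ereal (maxabs n (X k)) * kappa_star n K L X Z k (supp K \<beta>s))"
      using a_def J_def by simp
  qed
qed



lemma maxabs_ge: "i \<in> {1..n} \<Longrightarrow> \<bar>f i\<bar> \<le> maxabs n f"
  unfolding maxabs_def by (intro Max_ge) auto

lemma feas_star:
  fixes X Z :: "nat \<Rightarrow> nat \<Rightarrow> real" and Y U b :: "nat \<Rightarrow> real"
  assumes n: "1 \<le> n" and zpos: "\<forall>l\<in>{1..L}. 0 < maxabs n (Z l)"
    and resid: "\<forall>i\<in>{1..n}. Y i - (\<Sum>k=1..K. X k i * b k) = U i"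
    and bound: "\<forall>l\<in>{1..L}. \<bar>\<Sum>i=1..n. Z l i * U i\<bar> \<le> t * sqrt (\<Sum>i=1..n. (Z l i * U i)\<^sup>2)"
    and t: "0 \<le> t" and G2: "(1 / real n) * (\<Sum>i=1..n. (U i)\<^sup>2) \<le> \<sigma>\<^sup>2" and s: "0 < \<sigma>"
  shows "feasible n K L Y X Z (\<sigma> * (t / sqrt (real n))) b"
  unfolding feasible_def
proof (rule lpnorm_inf_leI)
  fix l assume l: "l \<in> {1..L}"
  define m where "m = maxabs n (Z l)"
  have m: "0 < m" using bspec[OF zpos l] m_def by simp
  have np: "0 < real n" using n by simp
  have eq: "(\<Sum>i=1..n. Z l i * (Y i - (\<Sum>k=1..K. X k i * b k))) = (\<Sum>i=1..n. Z l i * U i)"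
    using resid by (intro sum.cong) auto
  have "(\<Sum>i=1..n. (Z l i * U i)\<^sup>2) \<le> (\<Sum>i=1..n. m\<^sup>2 * (U i)\<^sup>2)"
  proof (rule sum_mono)
    fix i assume i: "i \<in> {1..n}"
    have "\<bar>Z l i\<bar> \<le> m" using maxabs_ge[OF i] m_def by simp
    hence "\<bar>Z l i\<bar>\<^sup>2 \<le> m\<^sup>2" by (intro power_mono) auto
    hence "(Z l i)\<^sup>2 \<le> m\<^sup>2" by simp
    thus "(Z l i * U i)\<^sup>2 \<le> m\<^sup>2 * (U i)\<^sup>2" by (simp add: power_mult_distrib mult_right_mono)
  qed
  hence "sqrt (\<Sum>i=1..n. (Z l i * U i)\<^sup>2) \<le> sqrt (m\<^sup>2 * (\<Sum>i=1..n. (U i)\<^sup>2))"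
    by (simp add: sum_distrib_left)
  also have "\<dots> = m * sqrt (\<Sum>i=1..n. (U i)\<^sup>2)" using m by (simp add: real_sqrt_mult)
  also have "sqrt (\<Sum>i=1..n. (U i)\<^sup>2) \<le> sqrt (real n * \<sigma>\<^sup>2)"
    using G2 np by (intro real_sqrt_le_mono) (simp add: field_simps)
  also have "sqrt (real n * \<sigma>\<^sup>2) = sqrt (real n) * \<sigma>" using s by (simp add: real_sqrt_mult)
  finally have V: "sqrt (\<Sum>i=1..n. (Z l i * U i)\<^sup>2) \<le> m * (sqrt (real n) * \<sigma>)" using m by simp
  have "\<bar>(1 / real n) * (\<Sum>i=1..n. Z l i * (Y i - (\<Sum>k=1..K. X k i * b k))) / maxabs n (Z l)\<bar>
      = \<bar>\<Sum>i=1..n. Z l i * U i\<bar> / (real n * m)" unfolding eq m_def[symmetric] using m np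
    by (simp add: abs_divide abs_mult)
  also have "\<dots> \<le> t * (m * (sqrt (real n) * \<sigma>)) / (real n * m)"
    using bound l V t m np by (intro divide_right_mono order.trans[OF _ mult_left_mono[OF V t]]) auto
  also have "\<dots> = \<sigma> * (t / sqrt (real n))"
  proof -
    have "real n = sqrt (real n) * sqrt (real n)" using np by simp
    hence "t * (m * (sqrt (real n) * \<sigma>)) / (real n * m) = t * (m * (sqrt (real n) * \<sigma>)) / (sqrt (real n) * sqrt (real n) * m)"
      by simp
    also have "\<dots> = \<sigma> * (t / sqrt (real n))" using m np by (simp add: field_simps)
    finally show ?thesis .
  qed
  finally show "\<bar>(1 / real n) * (\<Sum>i=1..n. Z l i * (Y i - (\<Sum>k=1..K. X k i * b k))) / maxabs n (Z l)\<bar> \<le> \<sigma> * (t / sqrt (real n))" .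
qed (use t s in auto)



lemma sq_le_powr:
  fixes a \<delta> :: real assumes "0 < \<delta>"
  shows "a\<^sup>2 \<le> \<bar>a\<bar> + \<bar>a\<bar> powr (2 + \<delta>)"
proof (cases "\<bar>a\<bar> \<le> 1")
  case True
  have "a\<^sup>2 = \<bar>a\<bar> * \<bar>a\<bar>" by (simp add: power2_eq_square)
  also have "\<dots> \<le> \<bar>a\<bar> * 1" using True by (intro mult_left_mono) auto
  finally show ?thesis using powr_ge_zero[of "\<bar>a\<bar>" "2 + \<delta>"] by linarith
next
  case False
  have "a\<^sup>2 = \<bar>a\<bar> powr 2" using False by (simp add: powr_numeral)
  also have "\<dots> \<le> \<bar>a\<bar> powr (2 + \<delta>)" using False assms by (intro powr_mono) auto
  finally show ?thesis by linarith
qed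

lemma jsw_apply:
  fixes N :: "'a measure" and Xv :: "nat \<Rightarrow> 'a \<Rightarrow> real"
  assumes "jsw_constant TYPE('a) A0 \<delta>" "prob_space N" "1 \<le> m"
    "prob_space.indep_vars N (\<lambda>_. borel) Xv {1..m}"
    "\<forall>i\<in>{1..m}. integrable N (Xv i) \<and> integral\<^sup>L N (Xv i) = 0 \<and>
          integrable N (\<lambda>\<omega>. \<bar>Xv i \<omega>\<bar> powr (2 + \<delta>)) \<and>
          0 < integral\<^sup>L N (\<lambda>\<omega>. \<bar>Xv i \<omega>\<bar> powr (2 + \<delta>))"
    "0 \<le> t" "t \<le> sqrt (\<Sum>i=1..m. integral\<^sup>L N (\<lambda>\<omega>. (Xv i \<omega>)\<^sup>2))
                / (\<Sum>i=1..m. integral\<^sup>L N (\<lambda>\<omega>. \<bar>Xv i \<omega>\<bar> powr (2 + \<delta>))) powr (1 / (2 + \<delta>))"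
  shows "\<bar>measure N {\<omega> \<in> space N. (\<Sum>i=1..m. Xv i \<omega>) / sqrt (\<Sum>i=1..m. (Xv i \<omega>)\<^sup>2) \<ge> t}
           - (1 - Phi t)\<bar>
         \<le> A0 * (1 + t) powr (1 + \<delta>) * exp (- t\<^sup>2 / 2) / (sqrt (\<Sum>i=1..m. integral\<^sup>L N (\<lambda>\<omega>. (Xv i \<omega>)\<^sup>2))
                / (\<Sum>i=1..m. integral\<^sup>L N (\<lambda>\<omega>. \<bar>Xv i \<omega>\<bar> powr (2 + \<delta>))) powr (1 / (2 + \<delta>))) powr (2 + \<delta>)"
proof -
  show "\<bar>measure N {\<omega> \<in> space N. (\<Sum>i=1..m. Xv i \<omega>) / sqrt (\<Sum>i=1..m. (Xv i \<omega>)\<^sup>2) \<ge> t}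
           - (1 - Phi t)\<bar>
         \<le> A0 * (1 + t) powr (1 + \<delta>) * exp (- t\<^sup>2 / 2) / (sqrt (\<Sum>i=1..m. integral\<^sup>L N (\<lambda>\<omega>. (Xv i \<omega>)\<^sup>2))
                / (\<Sum>i=1..m. integral\<^sup>L N (\<lambda>\<omega>. \<bar>Xv i \<omega>\<bar> powr (2 + \<delta>))) powr (1 / (2 + \<delta>))) powr (2 + \<delta>)"
    using assms(1) unfolding jsw_constant_def Let_def
    apply (elim allE[where x=N] allE[where x=m] allE[where x=Xv])
    using assms(2-7) by blast
qed



theorem theorem7:
  fixes M :: "'a measure"
    and n K L kend :: nat
    and y u :: "nat \<Rightarrow> 'a \<Rightarrow> real"
    and x z :: "nat \<Rightarrow> nat \<Rightarrow> 'a \<Rightarrow> real"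
    and \<beta>s :: "nat \<Rightarrow> real"
    and \<delta> \<sigma>s \<gamma>1 A A0 :: real
  assumes prob: "prob_space M"
    and n_pos: "1 \<le> n" and K_pos: "1 \<le> K" and KL: "K \<le> L" and kend: "kend \<le> K"
    and indep: "prob_space.indep_vars M (\<lambda>_. obs_space K L) (obs K L y x z u) {1..n}"
    and model: "\<forall>i\<in>{1..n}. \<forall>\<omega>\<in>space M. y i \<omega> = (\<Sum>k=1..K. x k i \<omega> * \<beta>s k) + u i \<omega>"
    and exo: "\<forall>l\<in>{1..K - kend}. \<forall>i\<in>{1..n}. \<forall>\<omega>\<in>space M. z l i \<omega> = x (kend + l) i \<omega>"
    and xpos: "\<forall>\<omega>\<in>space M. \<forall>k\<in>{1..K}. 0 < maxabs n (\<lambda>i. x k i \<omega>)"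
    and zpos: "\<forall>\<omega>\<in>space M. \<forall>l\<in>{1..L}. 0 < maxabs n (\<lambda>i. z l i \<omega>)"
    and jsw: "jsw_constant TYPE('a) A0 \<delta>"
    and delta: "0 < \<delta>" "\<delta> \<le> 1"
    and A1: "\<forall>i\<in>{1..n}. \<forall>l\<in>{1..L}.
               integrable M (\<lambda>\<omega>. \<bar>z l i \<omega> * u i \<omega>\<bar> powr (2 + \<delta>)) \<and>
               integrable M (\<lambda>\<omega>. z l i \<omega> * u i \<omega>) \<and>
               integral\<^sup>L M (\<lambda>\<omega>. z l i \<omega> * u i \<omega>) = 0 \<and>
               \<not> (AE \<omega> in M. z l i \<omega> * u i \<omega> = 0)"
    and A2: "0 < \<sigma>s" "0 < \<gamma>1" "\<gamma>1 < 1"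
      "measure M {\<omega> \<in> space M. (1 / real n) * (\<Sum>i=1..n. (u i \<omega>)\<^sup>2) \<le> \<sigma>s\<^sup>2} \<ge> 1 - \<gamma>1"
    and A_ge: "1 \<le> A"
    and L_le: "real L \<le> exp ((dnd M n L z u \<delta>)\<^sup>2 / (2 * A\<^sup>2))"
  shows "\<exists>E\<in>sets M.
     measure M E \<ge> 1
        - (2 * real L * (1 - Phi (A * sqrt (2 * ln (real L))))
           + 2 * A0 * (1 + A * sqrt (2 * ln (real L))) powr (1 + \<delta>)
             / (real L powr (A\<^sup>2 - 1) * dnd M n L z u \<delta> powr (2 + \<delta>)))
        - \<gamma>1 \<and>
     (\<forall>\<omega>\<in>E. \<forall>\<beta>h. is_solution n K L (\<lambda>i. y i \<omega>) (\<lambda>k i. x k i \<omega>) (\<lambda>l i. z l i \<omega>)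
                     (\<sigma>s * (A * sqrt (2 * ln (real L) / real n))) \<beta>h \<longrightarrow>
        (\<forall>p::ereal. 1 \<le> p \<longrightarrow>
           ereal (lpnorm p {1..K} (\<lambda>k. maxabs n (\<lambda>i. x k i \<omega>) * (\<beta>h k - \<beta>s k)))
             \<le> ereal (2 * \<sigma>s * (A * sqrt (2 * ln (real L) / real n)))
                / kappa n K L (\<lambda>k i. x k i \<omega>) (\<lambda>l i. z l i \<omega>) p (supp K \<beta>s)) \<and>
        (\<forall>k\<in>{1..K}.
           ereal \<bar>\<beta>h k - \<beta>s k\<bar>
             \<le> ereal (2 * \<sigma>s * (A * sqrt (2 * ln (real L) / real n)))
                / (ereal (maxabs n (\<lambda>i. x k i \<omega>))
                   * kappa_star n K L (\<lambda>k i. x k i \<omega>) (\<lambda>l i. z l i \<omega>) k (supp K \<beta>s))))"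
proof -
  interpret P: prob_space M by (rule prob)
  define t where "t = A * sqrt (2 * ln (real L))"
  define d where "d = dnd M n L z u \<delta>"
  have L1: "1 \<le> L" using K_pos KL by simp
  have Lpos: "0 < real L" using L1 by simp
  have lnL: "0 \<le> ln (real L)" using L1 by simp
  have t0: "0 \<le> t" using A_ge lnL unfolding t_def by simp
  have np: "0 < real n" using n_pos by simp
  have obsm: "obs K L y x z u i \<in> measurable M (obs_space K L)" if "i \<in> {1..n}" for i
    using bspec[OF conjunct1[OF indep[unfolded P.indep_vars_def2]] that] .
  define f where "f l p = fst (snd (snd p)) l * snd (snd (snd p))"
    for l and p :: "real \<times> (nat \<Rightarrow> real) \<times> (nat \<Rightarrow> real) \<times> real"
  have C1: "(\<lambda>p::real \<times> (nat \<Rightarrow> real) \<times> (nat \<Rightarrow> real) \<times> real. snd (snd p))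
      \<in> measurable (obs_space K L) (Pi\<^sub>M {1..L} (\<lambda>_. borel) \<Otimes>\<^sub>M borel)"
    unfolding obs_space_def by (rule measurable_compose[OF measurable_snd measurable_snd])
  have C3: "(\<lambda>p::real \<times> (nat \<Rightarrow> real) \<times> (nat \<Rightarrow> real) \<times> real. snd (snd (snd p))) \<in> borel_measurable (obs_space K L)"
    by (rule measurable_compose[OF C1 measurable_snd])
  have fm: "f l \<in> borel_measurable (obs_space K L)" if "l \<in> {1..L}" for l
  proof -
    have C2: "(\<lambda>p::real \<times> (nat \<Rightarrow> real) \<times> (nat \<Rightarrow> real) \<times> real. fst (snd (snd p)))
      \<in> measurable (obs_space K L) (Pi\<^sub>M {1..L} (\<lambda>_. borel))"
      by (rule measurable_compose[OF C1 measurable_fst])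
    have "(\<lambda>p::real \<times> (nat \<Rightarrow> real) \<times> (nat \<Rightarrow> real) \<times> real. fst (snd (snd p)) l) \<in> borel_measurable (obs_space K L)"
      using measurable_compose[OF C2 measurable_component_singleton[OF that]] by simp
    thus ?thesis unfolding f_def using C3 by (intro borel_measurable_times) auto
  qed
  have fobs: "f l (obs K L y x z u i \<omega>) = z l i \<omega> * u i \<omega>" if "l \<in> {1..L}" for l i \<omega>
    using that unfolding f_def obs_def by simp
  have zum: "(\<lambda>\<omega>. z l i \<omega> * u i \<omega>) \<in> borel_measurable M" if "l \<in> {1..L}" "i \<in> {1..n}" for l i
  proof -
    have "(\<lambda>\<omega>. f l (obs K L y x z u i \<omega>)) \<in> borel_measurable M"
      using measurable_comp[OF obsm[OF that(2)] fm[OF that(1)]] by (simp add: comp_def)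
    thus ?thesis using fobs[OF that(1)] by simp
  qed
  have um: "u i \<in> borel_measurable M" if "i \<in> {1..n}" for i
  proof -
    from measurable_comp[OF obsm[OF that] C3] show ?thesis by (simp add: comp_def obs_def)
  qed
  have ind: "P.indep_vars (\<lambda>_. borel) (\<lambda>i \<omega>. z l i \<omega> * u i \<omega>) {1..n}" if "l \<in> {1..L}" for l
  proof -
    have "P.indep_vars (\<lambda>_. borel) (\<lambda>i. f l \<circ> obs K L y x z u i) {1..n}"
      by (rule P.indep_vars_compose[OF indep]) (use fm[OF that] in auto)
    moreover have "(\<lambda>i. f l \<circ> obs K L y x z u i) = (\<lambda>i \<omega>. z l i \<omega> * u i \<omega>)"
      using fobs[OF that] by (auto simp: comp_def fun_eq_iff)
    ultimately show ?thesis by simp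
  qed
  have indn: "P.indep_vars (\<lambda>_. borel) (\<lambda>i \<omega>. - (z l i \<omega> * u i \<omega>)) {1..n}" if "l \<in> {1..L}" for l
  proof -
    have "P.indep_vars (\<lambda>_. borel) (\<lambda>i. (\<lambda>p. - f l p) \<circ> obs K L y x z u i) {1..n}"
      by (rule P.indep_vars_compose[OF indep]) (use fm[OF that] in auto)
    moreover have "(\<lambda>i. (\<lambda>p. - f l p) \<circ> obs K L y x z u i) = (\<lambda>i \<omega>. - (z l i \<omega> * u i \<omega>))"
      using fobs[OF that] by (auto simp: comp_def fun_eq_iff)
    ultimately show ?thesis by simp
  qed
  have int2: "integrable M (\<lambda>\<omega>. (z l i \<omega> * u i \<omega>)\<^sup>2)" if "l \<in> {1..L}" "i \<in> {1..n}" for l i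
  proof (rule Bochner_Integration.integrable_bound)
    show "integrable M (\<lambda>\<omega>. \<bar>z l i \<omega> * u i \<omega>\<bar> + \<bar>z l i \<omega> * u i \<omega>\<bar> powr (2 + \<delta>))"
      using A1 that by (intro Bochner_Integration.integrable_add integrable_abs) auto
    show "(\<lambda>\<omega>. (z l i \<omega> * u i \<omega>)\<^sup>2) \<in> borel_measurable M"
      by (intro borel_measurable_power zum[OF that])
    show "AE \<omega> in M. norm ((z l i \<omega> * u i \<omega>)\<^sup>2) \<le> norm (\<bar>z l i \<omega> * u i \<omega>\<bar> + \<bar>z l i \<omega> * u i \<omega>\<bar> powr (2 + \<delta>))"
      using sq_le_powr[OF delta(1)] by auto
  qed
  have pos2: "0 < integral\<^sup>L M (\<lambda>\<omega>. (z l i \<omega> * u i \<omega>)\<^sup>2)" if "l \<in> {1..L}" "i \<in> {1..n}" for l i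
  proof -
    have "integral\<^sup>L M (\<lambda>\<omega>. (z l i \<omega> * u i \<omega>)\<^sup>2) \<noteq> 0"
    proof
      assume "integral\<^sup>L M (\<lambda>\<omega>. (z l i \<omega> * u i \<omega>)\<^sup>2) = 0"
      hence "AE \<omega> in M. (z l i \<omega> * u i \<omega>)\<^sup>2 = 0"
        using integral_nonneg_eq_0_iff_AE[OF int2[OF that]] by simp
      hence "AE \<omega> in M. z l i \<omega> * u i \<omega> = 0" by simp
      thus False using A1 that by auto
    qed
    moreover have "0 \<le> integral\<^sup>L M (\<lambda>\<omega>. (z l i \<omega> * u i \<omega>)\<^sup>2)" by simp
    ultimately show ?thesis by linarith
  qed
  have posp: "0 < integral\<^sup>L M (\<lambda>\<omega>. \<bar>z l i \<omega> * u i \<omega>\<bar> powr (2 + \<delta>))" if "l \<in> {1..L}" "i \<in> {1..n}" for l i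
  proof -
    have "integral\<^sup>L M (\<lambda>\<omega>. \<bar>z l i \<omega> * u i \<omega>\<bar> powr (2 + \<delta>)) \<noteq> 0"
    proof
      assume "integral\<^sup>L M (\<lambda>\<omega>. \<bar>z l i \<omega> * u i \<omega>\<bar> powr (2 + \<delta>)) = 0"
      hence "AE \<omega> in M. \<bar>z l i \<omega> * u i \<omega>\<bar> powr (2 + \<delta>) = 0"
        using integral_nonneg_eq_0_iff_AE[of M "\<lambda>\<omega>. \<bar>z l i \<omega> * u i \<omega>\<bar> powr (2 + \<delta>)"] A1 that by simp
      hence "AE \<omega> in M. z l i \<omega> * u i \<omega> = 0" by simp
      thus False using A1 that by auto
    qed
    moreover have "0 \<le> integral\<^sup>L M (\<lambda>\<omega>. \<bar>z l i \<omega> * u i \<omega>\<bar> powr (2 + \<delta>))" by simp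
    ultimately show ?thesis by linarith
  qed
  define dl where "dl l = sqrt (\<Sum>i=1..n. integral\<^sup>L M (\<lambda>\<omega>. (z l i \<omega> * u i \<omega>)\<^sup>2))
     / (\<Sum>i=1..n. integral\<^sup>L M (\<lambda>\<omega>. \<bar>z l i \<omega> * u i \<omega>\<bar> powr (2 + \<delta>))) powr (1 / (2 + \<delta>))" for l
  have d_eq: "d = Min (dl ` {1..L})" unfolding d_def dnd_def dl_def by (simp add: power_mult_distrib)
  have dlpos: "0 < dl l" if "l \<in> {1..L}" for l
  proof -
    have "0 < (\<Sum>i=1..n. integral\<^sup>L M (\<lambda>\<omega>. (z l i \<omega> * u i \<omega>)\<^sup>2))"
      using pos2[OF that] n_pos by (intro sum_pos) auto
    moreover have "0 < (\<Sum>i=1..n. integral\<^sup>L M (\<lambda>\<omega>. \<bar>z l i \<omega> * u i \<omega>\<bar> powr (2 + \<delta>)))"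
      using posp[OF that] n_pos by (intro sum_pos) auto
    ultimately show ?thesis unfolding dl_def by simp
  qed
  have d_le: "d \<le> dl l" if "l \<in> {1..L}" for l unfolding d_eq using that by (intro Min_le) auto
  have dpos: "0 < d" unfolding d_eq using dlpos L1 by (subst Min_gr_iff) auto
  have A2pos: "0 < 2 * A\<^sup>2" using A_ge by simp
  have e1: "t\<^sup>2 = A\<^sup>2 * (sqrt (2 * ln (real L)))\<^sup>2" unfolding t_def by (rule power_mult_distrib)
  have e2: "(sqrt (2 * ln (real L)))\<^sup>2 = 2 * ln (real L)" using lnL by (intro real_sqrt_pow2) simp
  have t2: "t\<^sup>2 = 2 * A\<^sup>2 * ln (real L)" unfolding e1 e2 by (simp only: mult_ac)
  have td: "t \<le> d"
  proof -
    have h1: "ln (real L) \<le> ln (exp (d\<^sup>2 / (2 * A\<^sup>2)))" using L_le unfolding d_def[symmetric] by (subst ln_le_cancel_iff[OF Lpos exp_gt_zero])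
    hence "ln (real L) \<le> d\<^sup>2 / (2 * A\<^sup>2)" by (simp only: ln_exp)
    hence q: "ln (real L) * (2 * A\<^sup>2) \<le> d\<^sup>2" by (simp only: pos_le_divide_eq[OF A2pos])
    have "ln (real L) * (2 * A\<^sup>2) = 2 * A\<^sup>2 * ln (real L)" by (rule mult.commute)
    hence "t\<^sup>2 \<le> d\<^sup>2" using q t2 by linarith
    thus ?thesis by (rule power2_le_imp_le) (use dpos in linarith)
  qed
  define Q where "Q = A0 * (1 + t) powr (1 + \<delta>) * exp (- t\<^sup>2 / 2)"
  define B1 where "B1 l = {\<omega> \<in> space M. (\<Sum>i=1..n. z l i \<omega> * u i \<omega>) / sqrt (\<Sum>i=1..n. (z l i \<omega> * u i \<omega>)\<^sup>2) \<ge> t}" for l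
  define B2 where "B2 l = {\<omega> \<in> space M. (\<Sum>i=1..n. - (z l i \<omega> * u i \<omega>)) / sqrt (\<Sum>i=1..n. (- (z l i \<omega> * u i \<omega>))\<^sup>2) \<ge> t}" for l
  define G where "G = {\<omega> \<in> space M. (1 / real n) * (\<Sum>i=1..n. (u i \<omega>)\<^sup>2) \<le> \<sigma>s\<^sup>2}"
  define E where "E = G - (\<Union>l\<in>{1..L}. B1 l \<union> B2 l)"
  have B1m: "B1 l \<in> sets M" if l: "l \<in> {1..L}" for l
  proof -
    have [measurable]: "(\<lambda>\<omega>. \<Sum>i=1..n. z l i \<omega> * u i \<omega>) \<in> borel_measurable M"
      using zum l by (intro borel_measurable_sum) auto
    have [measurable]: "(\<lambda>\<omega>. \<Sum>i=1..n. (z l i \<omega> * u i \<omega>)\<^sup>2) \<in> borel_measurable M"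
      using zum l by (intro borel_measurable_sum borel_measurable_power) auto
    show ?thesis unfolding B1_def by measurable
  qed
  have B2m: "B2 l \<in> sets M" if l: "l \<in> {1..L}" for l
  proof -
    have [measurable]: "(\<lambda>\<omega>. \<Sum>i=1..n. - (z l i \<omega> * u i \<omega>)) \<in> borel_measurable M"
      using zum l by (intro borel_measurable_sum borel_measurable_uminus) auto
    have [measurable]: "(\<lambda>\<omega>. \<Sum>i=1..n. (- (z l i \<omega> * u i \<omega>))\<^sup>2) \<in> borel_measurable M"
      using zum l by (intro borel_measurable_sum borel_measurable_power borel_measurable_uminus) auto
    show ?thesis unfolding B2_def by measurable
  qed
  have Gm: "G \<in> sets M"
  proof -
    have [measurable]: "(\<lambda>\<omega>. \<Sum>i=1..n. (u i \<omega>)\<^sup>2) \<in> borel_measurable M"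
      using um by (intro borel_measurable_sum borel_measurable_power) auto
    show ?thesis unfolding G_def by measurable
  qed
  have Um: "(\<Union>l\<in>{1..L}. B1 l \<union> B2 l) \<in> sets M" using B1m B2m by (intro sets.finite_UN sets.Un) auto
  have Em: "E \<in> sets M" unfolding E_def using Gm Um by (rule sets.Diff)
  have dp: "0 < d powr (2 + \<delta>)" using dpos by simp
  have pB1: "measure M (B1 l) \<le> (1 - Phi t) + Q / d powr (2 + \<delta>)" and Qnn: "0 \<le> Q"
    if l: "l \<in> {1..L}" for l
  proof -
    have mom: "\<forall>i\<in>{1..n}. integrable M (\<lambda>\<omega>. z l i \<omega> * u i \<omega>) \<and> integral\<^sup>L M (\<lambda>\<omega>. z l i \<omega> * u i \<omega>) = 0 \<and>
          integrable M (\<lambda>\<omega>. \<bar>z l i \<omega> * u i \<omega>\<bar> powr (2 + \<delta>)) \<and>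
          0 < integral\<^sup>L M (\<lambda>\<omega>. \<bar>z l i \<omega> * u i \<omega>\<bar> powr (2 + \<delta>))"
      using A1 posp l by auto
    have tdl: "t \<le> dl l" using td d_le[OF l] by linarith
    have J: "\<bar>measure M (B1 l) - (1 - Phi t)\<bar> \<le> Q / dl l powr (2 + \<delta>)"
      unfolding B1_def Q_def dl_def
      by (rule jsw_apply[OF jsw prob n_pos ind[OF l] mom t0 tdl[unfolded dl_def]])
    have dlp: "0 < dl l powr (2 + \<delta>)" using dlpos[OF l] by simp
    have "0 \<le> Q / dl l powr (2 + \<delta>)" using J by linarith
    thus Q0: "0 \<le> Q" using dlp by (simp add: zero_le_divide_iff)
    have "dl l powr (2 + \<delta>) \<ge> d powr (2 + \<delta>)" using d_le[OF l] dpos delta(1) by (intro powr_mono2) auto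
    hence "Q / dl l powr (2 + \<delta>) \<le> Q / d powr (2 + \<delta>)" by (rule divide_left_mono[OF _ Q0 mult_pos_pos[OF dlp dp]])
    thus "measure M (B1 l) \<le> (1 - Phi t) + Q / d powr (2 + \<delta>)" using J by linarith
  qed
  have pB2: "measure M (B2 l) \<le> (1 - Phi t) + Q / d powr (2 + \<delta>)" if l: "l \<in> {1..L}" for l
  proof -
    have mom: "\<forall>i\<in>{1..n}. integrable M (\<lambda>\<omega>. - (z l i \<omega> * u i \<omega>)) \<and> integral\<^sup>L M (\<lambda>\<omega>. - (z l i \<omega> * u i \<omega>)) = 0 \<and>
          integrable M (\<lambda>\<omega>. \<bar>- (z l i \<omega> * u i \<omega>)\<bar> powr (2 + \<delta>)) \<and>
          0 < integral\<^sup>L M (\<lambda>\<omega>. \<bar>- (z l i \<omega> * u i \<omega>)\<bar> powr (2 + \<delta>))"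
      using A1 posp l by simp
    have tdl: "t \<le> sqrt (\<Sum>i=1..n. integral\<^sup>L M (\<lambda>\<omega>. (- (z l i \<omega> * u i \<omega>))\<^sup>2))
                / (\<Sum>i=1..n. integral\<^sup>L M (\<lambda>\<omega>. \<bar>- (z l i \<omega> * u i \<omega>)\<bar> powr (2 + \<delta>))) powr (1 / (2 + \<delta>))"
      using td d_le[OF l] unfolding dl_def by simp
    have J0: "\<bar>measure M (B2 l) - (1 - Phi t)\<bar> \<le> Q / (sqrt (\<Sum>i=1..n. integral\<^sup>L M (\<lambda>\<omega>. (- (z l i \<omega> * u i \<omega>))\<^sup>2))
                / (\<Sum>i=1..n. integral\<^sup>L M (\<lambda>\<omega>. \<bar>- (z l i \<omega> * u i \<omega>)\<bar> powr (2 + \<delta>))) powr (1 / (2 + \<delta>))) powr (2 + \<delta>)"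
      unfolding B2_def Q_def
      by (rule jsw_apply[OF jsw prob n_pos indn[OF l] mom t0 tdl])
    hence J: "\<bar>measure M (B2 l) - (1 - Phi t)\<bar> \<le> Q / dl l powr (2 + \<delta>)"
      unfolding dl_def by simp
    have "dl l powr (2 + \<delta>) \<ge> d powr (2 + \<delta>)" using d_le[OF l] dpos delta(1) by (intro powr_mono2) auto
    moreover have dlp: "0 < dl l powr (2 + \<delta>)" using dlpos[OF l] by simp
    ultimately have "Q / dl l powr (2 + \<delta>) \<le> Q / d powr (2 + \<delta>)" by (intro divide_left_mono[OF _ Qnn[OF l] mult_pos_pos[OF _ dp]])
    thus ?thesis using J by linarith
  qed
  have PG: "measure M G \<ge> 1 - \<gamma>1" using A2(4) unfolding G_def .
  have PU: "measure M (\<Union>l\<in>{1..L}. B1 l \<union> B2 l) \<le> real L * (2 * ((1 - Phi t) + Q / d powr (2 + \<delta>)))"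
  proof -
    have "measure M (\<Union>l\<in>{1..L}. B1 l \<union> B2 l) \<le> (\<Sum>l\<in>{1..L}. measure M (B1 l \<union> B2 l))"
      using B1m B2m by (intro measure_UNION_le) auto
    also have "\<dots> \<le> (\<Sum>l\<in>{1..L}. 2 * ((1 - Phi t) + Q / d powr (2 + \<delta>)))"
    proof (rule sum_mono)
      fix l assume l: "l \<in> {1..L}"
      have "measure M (B1 l \<union> B2 l) \<le> measure M (B1 l) + measure M (B2 l)"
        using B1m[OF l] B2m[OF l] by (rule measure_Un_le)
      thus "measure M (B1 l \<union> B2 l) \<le> 2 * ((1 - Phi t) + Q / d powr (2 + \<delta>))"
        using pB1[OF l] pB2[OF l] unfolding mult_2 by linarith
    qed
    also have "\<dots> = real L * (2 * ((1 - Phi t) + Q / d powr (2 + \<delta>)))" by simp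
    finally show ?thesis .
  qed
  have PE: "measure M E \<ge> measure M G - measure M (\<Union>l\<in>{1..L}. B1 l \<union> B2 l)"
  proof -
    have "measure M E = measure M G - measure M (G \<inter> (\<Union>l\<in>{1..L}. B1 l \<union> B2 l))"
      unfolding E_def by (rule P.finite_measure_Diff'[OF Gm Um])
    moreover have "measure M (G \<inter> (\<Union>l\<in>{1..L}. B1 l \<union> B2 l)) \<le> measure M (\<Union>l\<in>{1..L}. B1 l \<union> B2 l)"
      using Um by (intro P.finite_measure_mono) auto
    ultimately show ?thesis by linarith
  qed
  define Lp where "Lp = real L powr (A\<^sup>2 - 1)"
  have Lpp: "0 < Lp" unfolding Lp_def using Lpos by simp
  have key: "real L * exp (- t\<^sup>2 / 2) * Lp = 1"
  proof -
    have ea: "exp (- t\<^sup>2 / 2) = exp (- (A\<^sup>2 * ln (real L)))" unfolding t2 by simp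
    have eb: "Lp = exp ((A\<^sup>2 - 1) * ln (real L))" unfolding Lp_def powr_def using Lpos by (simp add: mult.commute)
    have "real L * exp (- t\<^sup>2 / 2) * Lp = exp (ln (real L)) * exp (- (A\<^sup>2 * ln (real L))) * exp ((A\<^sup>2 - 1) * ln (real L))"
      unfolding ea eb using Lpos by simp
    also have "\<dots> = exp (ln (real L) + - (A\<^sup>2 * ln (real L)) + (A\<^sup>2 - 1) * ln (real L))"
      by (simp only: exp_add)
    also have "ln (real L) + - (A\<^sup>2 * ln (real L)) + (A\<^sup>2 - 1) * ln (real L) = 0" by (simp add: algebra_simps)
    finally show ?thesis by simp
  qed
  have ex: "exp (- t\<^sup>2 / 2) = 1 / (real L * Lp)" using key Lpos Lpp by (simp add: field_simps)
  have alpha: "2 * real L * (1 - Phi t) + 2 * A0 * (1 + t) powr (1 + \<delta>) / (Lp * d powr (2 + \<delta>))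
      = real L * (2 * ((1 - Phi t) + Q / d powr (2 + \<delta>)))"
    unfolding Q_def ex using Lpos Lpp dp by (simp add: field_simps)
  have meas: "measure M E \<ge> 1 - (2 * real L * (1 - Phi t) + 2 * A0 * (1 + t) powr (1 + \<delta>) / (Lp * d powr (2 + \<delta>))) - \<gamma>1"
    unfolding alpha using PE PU PG by linarith
  have ceq: "\<sigma>s * (A * sqrt (2 * ln (real L) / real n)) = \<sigma>s * (t / sqrt (real n))"
    unfolding t_def by (simp add: real_sqrt_divide)
  have ceq2: "2 * \<sigma>s * (A * sqrt (2 * ln (real L) / real n)) = 2 * (\<sigma>s * (t / sqrt (real n)))"
    using ceq by simp
  show ?thesis
  proof (rule bexI[OF conjI Em])
    show "measure M E \<ge> 1
        - (2 * real L * (1 - Phi (A * sqrt (2 * ln (real L))))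
           + 2 * A0 * (1 + A * sqrt (2 * ln (real L))) powr (1 + \<delta>)
             / (real L powr (A\<^sup>2 - 1) * dnd M n L z u \<delta> powr (2 + \<delta>)))
        - \<gamma>1"
      using meas unfolding t_def d_def Lp_def .
    show "\<forall>\<omega>\<in>E. \<forall>\<beta>h. is_solution n K L (\<lambda>i. y i \<omega>) (\<lambda>k i. x k i \<omega>) (\<lambda>l i. z l i \<omega>)
                     (\<sigma>s * (A * sqrt (2 * ln (real L) / real n))) \<beta>h \<longrightarrow>
        (\<forall>p::ereal. 1 \<le> p \<longrightarrow>
           ereal (lpnorm p {1..K} (\<lambda>k. maxabs n (\<lambda>i. x k i \<omega>) * (\<beta>h k - \<beta>s k)))
             \<le> ereal (2 * \<sigma>s * (A * sqrt (2 * ln (real L) / real n)))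
                / kappa n K L (\<lambda>k i. x k i \<omega>) (\<lambda>l i. z l i \<omega>) p (supp K \<beta>s)) \<and>
        (\<forall>k\<in>{1..K}.
           ereal \<bar>\<beta>h k - \<beta>s k\<bar>
             \<le> ereal (2 * \<sigma>s * (A * sqrt (2 * ln (real L) / real n)))
                / (ereal (maxabs n (\<lambda>i. x k i \<omega>))
                   * kappa_star n K L (\<lambda>k i. x k i \<omega>) (\<lambda>l i. z l i \<omega>) k (supp K \<beta>s)))"
      unfolding ceq ceq2
    proof (intro ballI allI impI)
      fix \<omega> \<beta>h
      assume \<omega>E: "\<omega> \<in> E"
      assume sol: "is_solution n K L (\<lambda>i. y i \<omega>) (\<lambda>k i. x k i \<omega>) (\<lambda>l i. z l i \<omega>) (\<sigma>s * (t / sqrt (real n))) \<beta>h"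
      have \<omega>: "\<omega> \<in> space M" and G\<omega>: "(1 / real n) * (\<Sum>i=1..n. (u i \<omega>)\<^sup>2) \<le> \<sigma>s\<^sup>2"
        and nb: "\<And>l. l \<in> {1..L} \<Longrightarrow> \<omega> \<notin> B1 l \<and> \<omega> \<notin> B2 l"
        using \<omega>E unfolding E_def G_def by auto
      have bnd: "\<bar>\<Sum>i=1..n. z l i \<omega> * u i \<omega>\<bar> \<le> t * sqrt (\<Sum>i=1..n. (z l i \<omega> * u i \<omega>)\<^sup>2) \<and> 0 < t"
        if l: "l \<in> {1..L}" for l
      proof -
        define S where "S = (\<Sum>i=1..n. z l i \<omega> * u i \<omega>)"
        define V where "V = sqrt (\<Sum>i=1..n. (z l i \<omega> * u i \<omega>)\<^sup>2)"
        have n1: "\<not> (t \<le> S / V)" using nb[OF l] \<omega> unfolding B1_def S_def V_def by auto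
        have n2: "\<not> (t \<le> - S / V)" using nb[OF l] \<omega> unfolding B2_def S_def V_def by (auto simp: sum_negf)
        have V0: "0 \<le> V" unfolding V_def by (simp add: sum_nonneg)
        show ?thesis
        proof (cases "V = 0")
          case True
          hence "(\<Sum>i=1..n. (z l i \<omega> * u i \<omega>)\<^sup>2) = 0" unfolding V_def by simp
          hence "\<forall>i\<in>{1..n}. (z l i \<omega> * u i \<omega>)\<^sup>2 = 0" by (subst (asm) sum_nonneg_eq_0_iff) auto
          hence "S = 0" unfolding S_def by (intro sum.neutral) auto
          thus ?thesis using True n1 unfolding S_def[symmetric] V_def[symmetric] by simp
        next
          case False
          hence Vp: "0 < V" using V0 by simp
          have "S / V < t" using n1 by linarith
          hence "S < t * V" using pos_divide_less_eq[OF Vp, of S t] by simp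
          moreover have "- S / V < t" using n2 by linarith
          hence "- S < t * V" using pos_divide_less_eq[OF Vp, of "- S" t] by simp
          ultimately have a: "\<bar>S\<bar> \<le> t * V" by (simp add: abs_le_iff)
          have "0 < t * V" using \<open>S < t * V\<close> \<open>- S < t * V\<close> by linarith
          hence "0 < t" using Vp by (simp add: zero_less_mult_iff)
          with a show ?thesis unfolding S_def V_def by simp
        qed
      qed
      have tpos: "0 < t" using bnd[of 1] L1 by auto
      have feas: "feasible n K L (\<lambda>i. y i \<omega>) (\<lambda>k i. x k i \<omega>) (\<lambda>l i. z l i \<omega>) (\<sigma>s * (t / sqrt (real n))) \<beta>s"
      proof (rule feas_star[OF n_pos])
        show "\<forall>l\<in>{1..L}. 0 < maxabs n (\<lambda>i. z l i \<omega>)" using zpos \<omega> by auto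
        show "\<forall>i\<in>{1..n}. y i \<omega> - (\<Sum>k=1..K. x k i \<omega> * \<beta>s k) = u i \<omega>" using model \<omega> by auto
        show "\<forall>l\<in>{1..L}. \<bar>\<Sum>i=1..n. z l i \<omega> * u i \<omega>\<bar> \<le> t * sqrt (\<Sum>i=1..n. (z l i \<omega> * u i \<omega>)\<^sup>2)"
          using bnd by auto
      qed (use t0 G\<omega> A2(1) in auto)
      have cpos: "0 < \<sigma>s * (t / sqrt (real n))" using A2(1) tpos np by simp
      note D = det[OF _ _ feas sol cpos]
      have xp: "\<forall>k\<in>{1..K}. 0 < maxabs n (\<lambda>i. x k i \<omega>)" using xpos \<omega> by auto
      have zp: "\<forall>l\<in>{1..L}. 0 < maxabs n (\<lambda>i. z l i \<omega>)" using zpos \<omega> by auto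
      from D[OF xp zp]
      show "(\<forall>p::ereal. 1 \<le> p \<longrightarrow>
           ereal (lpnorm p {1..K} (\<lambda>k. maxabs n (\<lambda>i. x k i \<omega>) * (\<beta>h k - \<beta>s k)))
             \<le> ereal (2 * (\<sigma>s * (t / sqrt (real n))))
                / kappa n K L (\<lambda>k i. x k i \<omega>) (\<lambda>l i. z l i \<omega>) p (supp K \<beta>s)) \<and>
        (\<forall>k\<in>{1..K}.
           ereal \<bar>\<beta>h k - \<beta>s k\<bar>
             \<le> ereal (2 * (\<sigma>s * (t / sqrt (real n))))
                / (ereal (maxabs n (\<lambda>i. x k i \<omega>))
                   * kappa_star n K L (\<lambda>k i. x k i \<omega>) (\<lambda>l i. z l i \<omega>) k (supp K \<beta>s)))" .
    qed
  qed
qed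


end
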